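(* For every positive integer $n$, there exists a top-balanced permutation sequence of length $n$; that is, there exist bijections $\pi_1,\ldots,\pi_n : N \to [n]$ such that for every day $t \in [n]$ and every player $i \in N$ we have $Z_i^t[1] \le \lceil n/t \rceil$.
   Context: Let $n$ be a positive integer, $N$ a set of $n$ players and $[n]=\{1,\ldots,n\}$ a set of $n$ items, where smaller numbers denote better items. A permutation sequence of length $n$ is an ordered tuple $(\pi_1,\ldots,\pi_n)$ of bijections $\pi_t : N\to[n]$; on day $t$ player $i$ receives item $\pi_t(i)$. For $t\in[n]$ and $i\in N$, $Z_i^t$ denotes the multiset $\{\pi_1(i),\ldots,\pi_t(i)\}$, and for $j\in[t]$, $Z_i^t[j]$ denotes the $j$-th smallest element of $Z_i^t$ (counted with multiplicity), so $Z_i^t[1]$ is the best item $i$ received in the first $t$ days. *)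

theory Defs
  imports Complex_Main "HOL-Library.Multiset"
begin

definition perm_seq :: "'a set \<Rightarrow> nat \<Rightarrow> (nat \<Rightarrow> 'a \<Rightarrow> nat) \<Rightarrow> bool" where
  "perm_seq N n \<sigma> \<longleftrightarrow> (\<forall>t\<in>{1..n}. bij_betw (\<sigma> t) N {1..n})"

definition Z :: "(nat \<Rightarrow> 'a \<Rightarrow> nat) \<Rightarrow> 'a \<Rightarrow> nat \<Rightarrow> nat multiset" where
  "Z \<sigma> i t = image_mset (\<lambda>s. \<sigma> s i) (mset_set {1..t})"

text \<open>Z_i^t[j]: the j-th smallest element (1-indexed, with multiplicity).\<close>
definition Z_nth :: "(nat \<Rightarrow> 'a \<Rightarrow> nat) \<Rightarrow> 'a \<Rightarrow> nat \<Rightarrow> nat \<Rightarrow> nat" where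
  "Z_nth \<sigma> i t j = sorted_list_of_multiset (Z \<sigma> i t) ! (j - 1)"

definition top_balanced :: "'a set \<Rightarrow> nat \<Rightarrow> (nat \<Rightarrow> 'a \<Rightarrow> nat) \<Rightarrow> bool" where
  "top_balanced N n \<sigma> \<longleftrightarrow> perm_seq N n \<sigma> \<and>
     (\<forall>t\<in>{1..n}. \<forall>i\<in>N. Z_nth \<sigma> i t 1 \<le> nat \<lceil>real n / real t\<rceil>)"

end

theory Submission imports Defs begin

lemma sort_bij:
  fixes m :: "'a \<Rightarrow> nat"
  shows "finite N \<Longrightarrow> card N = n \<Longrightarrow> \<exists>p. bij_betw p N {1..n} \<and> (\<forall>x\<in>N. \<forall>y\<in>N. p x < p y \<longrightarrow> m y \<le> m x)"
proof (induction n arbitrary: N)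
  case 0
  then show ?case by (auto simp: bij_betw_def)
next
  case (Suc n)
  then have ne: "N \<noteq> {}" by auto
  have "Min (m ` N) \<in> m ` N" using Suc.prems ne by (intro Min_in) auto
  then obtain x where x: "x \<in> N" "m x = Min (m ` N)" by auto
  have xmin: "\<forall>y\<in>N. m x \<le> m y" using x Suc.prems by auto
  obtain p where p: "bij_betw p (N - {x}) {1..n}" "\<forall>a\<in>N-{x}. \<forall>b\<in>N-{x}. p a < p b \<longrightarrow> m b \<le> m a"
    using Suc.IH[of "N - {x}"] Suc.prems x by auto
  define q where "q = p(x := Suc n)"
  have "bij_betw q (N - {x}) {1..n}" using p(1) unfolding q_def
    by (rule bij_betw_cong[THEN iffD1, rotated]) auto
  then have "bij_betw q ((N - {x}) \<union> {x}) ({1..n} \<union> {q x})"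
    by (intro notIn_Un_bij_betw) (auto simp: q_def)
  moreover have "(N - {x}) \<union> {x} = N" using x by auto
  moreover have "{1..n} \<union> {q x} = {1..Suc n}" by (auto simp: q_def)
  ultimately have "bij_betw q N {1..Suc n}" by simp
  moreover have "\<forall>a\<in>N. \<forall>b\<in>N. q a < q b \<longrightarrow> m b \<le> m a"
  proof (intro ballI impI)
    fix a b assume ab: "a \<in> N" "b \<in> N" "q a < q b"
    show "m b \<le> m a"
    proof (cases "b = x")
      case True then show ?thesis using xmin ab by auto
    next
      case False
      show ?thesis
      proof (cases "a = x")
        case True
        have "q b \<in> {1..n}" using False ab p(1) by (auto simp: q_def bij_betw_def)
        then show ?thesis using True ab by (auto simp: q_def)
      next
        case False2: False
        then show ?thesis using False ab p(2) by (auto simp: q_def)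
      qed
    qed
  qed
  ultimately show ?case by blast
qed
definition G :: "'a set \<Rightarrow> (nat \<Rightarrow> 'a \<Rightarrow> nat) \<Rightarrow> nat \<Rightarrow> nat \<Rightarrow> 'a set" where
  "G N \<sigma> t v = {i\<in>N. \<exists>s\<in>{1..t}. \<sigma> s i \<le> v}"

lemma build:
  fixes N :: "'a set"
  assumes fin: "finite N" and cN: "card N = n"
  shows "T \<le> n \<Longrightarrow> \<exists>\<sigma>. (\<forall>t\<in>{1..T}. bij_betw (\<sigma> t) N {1..n}) \<and>
          (\<forall>t\<in>{1..T}. \<forall>v. min n (v * t) \<le> card (G N \<sigma> t v))"
proof (induction T)
  case 0
  then show ?case by auto
next
  case (Suc T)
  then obtain \<sigma> where s1: "\<forall>t\<in>{1..T}. bij_betw (\<sigma> t) N {1..n}"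
    and s2: "\<forall>t\<in>{1..T}. \<forall>v. min n (v * t) \<le> card (G N \<sigma> t v)" by auto
  define m where "m i = Min ((\<lambda>s. \<sigma> s i) ` {1..T})" for i
  obtain p where p1: "bij_betw p N {1..n}" and p2: "\<forall>x\<in>N. \<forall>y\<in>N. p x < p y \<longrightarrow> m y \<le> m x"
    using sort_bij[OF fin cN, of m] by auto
  define \<sigma>' where "\<sigma>' = \<sigma>(Suc T := p)"
  have Geq: "G N \<sigma>' t v = G N \<sigma> t v" if "t \<le> T" for t v
    using that unfolding G_def \<sigma>'_def by auto
  have GS: "G N \<sigma>' (Suc T) v = G N \<sigma> T v \<union> {i\<in>N. p i \<le> v}" for v
  proof -
    have e: "{1..Suc T} = insert (Suc T) {1..T}" by auto
    show ?thesis unfolding G_def \<sigma>'_def e by auto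
  qed
  have Gm: "i \<in> G N \<sigma> T v \<longleftrightarrow> i \<in> N \<and> T \<ge> 1 \<and> m i \<le> v" for i v
  proof (cases "T \<ge> 1")
    case True
    then show ?thesis unfolding G_def m_def by (subst Min_le_iff) auto
  next
    case False
    then show ?thesis unfolding G_def by auto
  qed
  have cW: "card {i\<in>N. p i \<le> v} = min n v" for v
  proof -
    have "bij_betw p {i\<in>N. p i \<le> v} {1..min n v}"
      using p1 unfolding bij_betw_def inj_on_def by (auto simp: image_iff) (metis atLeastAtMost_iff imageE)
    then show ?thesis by (simp add: bij_betw_same_card)
  qed
  have new: "min n (v * Suc T) \<le> card (G N \<sigma>' (Suc T) v)" for v
  proof (cases "G N \<sigma> T v \<inter> {i\<in>N. p i \<le> v} = {}")
    case True
    have c0: "min n (v * T) \<le> card (G N \<sigma> T v)"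
    proof (cases "T = 0")
      case True then show ?thesis by simp
    next
      case False then show ?thesis using s2 by auto
    qed
    have "card (G N \<sigma>' (Suc T) v) = card (G N \<sigma> T v) + card {i\<in>N. p i \<le> v}"
      unfolding GS by (rule card_Un_disjoint) (use fin True in \<open>auto simp: G_def\<close>)
    then show ?thesis using c0 cW by auto
  next
    case False
    then obtain x where x: "x \<in> G N \<sigma> T v" "x \<in> N" "p x \<le> v" by auto
    have "G N \<sigma>' (Suc T) v = N"
    proof
      show "G N \<sigma>' (Suc T) v \<subseteq> N" unfolding G_def by auto
    next
      show "N \<subseteq> G N \<sigma>' (Suc T) v"
      proof
        fix y assume y: "y \<in> N"
        show "y \<in> G N \<sigma>' (Suc T) v"
        proof (cases "p y \<le> v")
          case True then show ?thesis using y GS by auto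
        next
          case False
          then have "m y \<le> m x" using p2 x y by auto
          then show ?thesis using Gm x y GS by auto
        qed
      qed
    qed
    then show ?thesis using cN by auto
  qed
  show ?case
  proof (intro exI[of _ \<sigma>'] conjI ballI allI)
    fix t assume "t \<in> {1..Suc T}"
    then show "bij_betw (\<sigma>' t) N {1..n}" using s1 p1 by (auto simp: \<sigma>'_def le_Suc_eq)
  next
    fix t v assume t: "t \<in> {1..Suc T}"
    show "min n (v * t) \<le> card (G N \<sigma>' t v)"
    proof (cases "t = Suc T")
      case True then show ?thesis using new by simp
    next
      case False then show ?thesis using t s2 Geq by auto
    qed
  qed
qed

lemma sorted_first_le:
  assumes "sorted xs" "a \<in> set xs" "a \<le> v"
  shows "xs ! 0 \<le> v"
  using assms by (cases xs) auto

theorem mainTheorem1: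
  fixes N :: "'a set" and n :: nat
  assumes "finite N" and "card N = n" and "n \<ge> 1"
  shows "\<exists>\<sigma> :: nat \<Rightarrow> 'a \<Rightarrow> nat. top_balanced N n \<sigma>"
proof -
  obtain \<sigma> :: "nat \<Rightarrow> 'a \<Rightarrow> nat" where s1: "\<forall>t\<in>{1..n}. bij_betw (\<sigma> t) N {1..n}"
    and s2: "\<forall>t\<in>{1..n}. \<forall>v. min n (v * t) \<le> card (G N \<sigma> t v)"
    using build[OF assms(1,2), of n] by auto
  have "Z_nth \<sigma> i t 1 \<le> nat \<lceil>real n / real t\<rceil>" if t: "t \<in> {1..n}" and i: "i \<in> N" for t i
  proof -
    define v where "v = nat \<lceil>real n / real t\<rceil>"
    have "real n / real t \<le> real v" unfolding v_def by linarith
    then have "real n \<le> real v * real t" using t by (simp add: field_simps)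
    then have "n \<le> v * t" by (metis of_nat_le_iff of_nat_mult)
    then have "n \<le> card (G N \<sigma> t v)" using s2 t by (metis min.absorb1)
    moreover have "G N \<sigma> t v \<subseteq> N" unfolding G_def by auto
    ultimately have "G N \<sigma> t v = N" using assms(1,2) by (metis card_seteq)
    then obtain s where s: "s \<in> {1..t}" "\<sigma> s i \<le> v" using i unfolding G_def by blast
    have "\<sigma> s i \<in> set (sorted_list_of_multiset (Z \<sigma> i t))"
      using s unfolding Z_def by auto
    then show ?thesis unfolding Z_nth_def v_def[symmetric]
      using sorted_first_le[OF sorted_sorted_list_of_multiset] s(2) by simp
  qed
  then show ?thesis using s1 unfolding top_balanced_def perm_seq_def by blast
qed

end
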